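(* Under the standing assumptions in the context, there exist a neighborhood $\mathcal U$ of $(0,\bar X)$ and $C>0$ such that for every $(t,X)\in\mathcal U\cap\{t>0\}$, \[ |\partial_t\lambda_1|\le C a,\qquad |\partial_t\lambda_2|\le C,\qquad |\partial_t\lambda_3|\le C . \]
   Context: Let $W\subset\mathbb R^l$ be open, $\bar X\in W$, $c,T>0$, and let $a(t,X),b(t,X)$ be real-valued $C^\infty$ functions on $(-c,T)\times W$ with bounded derivatives of all orders. Assume $\Delta(t,X):=4a(t,X)^3-27b(t,X)^2\ge 0$ on $[0,T)\times W$, $a(0,\bar X)=0$, and $a(t,X)>0$ on $(0,T)\times W$. Let $S(t,X)=\begin{bmatrix}3&0&-a\\0&2a&3b\\-a&3b&a^2\end{bmatrix}$ and let $0\le\lambda_1\le\lambda_2\le\lambda_3$ be its eigenvalues (smooth on $\mathcal U\cap\{t>0\}$ for a small neighborhood $\mathcal U$ of $(0,\bar X)$). *)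

theory Defs
  imports "HOL-Analysis.Analysis"
begin

fun dderiv :: "'a::real_normed_vector list \<Rightarrow> ('a \<Rightarrow> real) \<Rightarrow> 'a \<Rightarrow> real" where
  "dderiv [] f = f"
| "dderiv (v # vs) f = (\<lambda>p. frechet_derivative (dderiv vs f) (at p) v)"

definition smooth_bdd_on :: "'a::euclidean_space set \<Rightarrow> ('a \<Rightarrow> real) \<Rightarrow> bool" where
  "smooth_bdd_on U f \<longleftrightarrow>
     (\<forall>vs. set vs \<subseteq> Basis \<longrightarrow>
        (\<forall>p\<in>U. dderiv vs f differentiable (at p)) \<and> bounded (dderiv vs f ` U))"

definition Smat :: "real \<Rightarrow> real \<Rightarrow> real^3^3" where
  "Smat a b = vector [vector [3, 0, - a], vector [0, 2 * a, 3 * b], vector [- a, 3 * b, a ^ 2]]"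

definition eigs :: "real^3^3 \<Rightarrow> real \<times> real \<times> real" where
  "eigs M = (THE (l1, l2, l3). l1 \<le> l2 \<and> l2 \<le> l3 \<and>
       (\<forall>\<mu>. det (mat \<mu> - M) = (\<mu> - l1) * (\<mu> - l2) * (\<mu> - l3)))"

definition lam1 :: "real^3^3 \<Rightarrow> real" where "lam1 M = fst (eigs M)"
definition lam2 :: "real^3^3 \<Rightarrow> real" where "lam2 M = fst (snd (eigs M))"
definition lam3 :: "real^3^3 \<Rightarrow> real" where "lam3 M = snd (snd (eigs M))"

end

theory Submission
  imports Defs
begin

definition CP :: "real \<Rightarrow> real \<Rightarrow> real \<Rightarrow> real" where
  "CP x y \<mu> = \<mu>^3 - (3+2*x+x^2)*\<mu>^2 + (6*x+2*x^2+2*x^3-9*y^2)*\<mu> - (4*x^3-27*y^2)"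

lemma charpoly: "det (mat \<mu> - Smat x y) = CP x y \<mu>"
  by (simp add: CP_def det_3 Smat_def mat_def algebra_simps power2_eq_square power3_eq_cube)

lemma cubic_factor:
  fixes A B D z1 z2 z3 :: real
  assumes r1: "z1^3 - A*z1^2 + B*z1 - D = 0" and r2: "z2^3 - A*z2^2 + B*z2 - D = 0"
    and r3: "z3^3 - A*z3^2 + B*z3 - D = 0" and "z1 < z2" "z2 < z3"
  shows "\<mu>^3 - A*\<mu>^2 + B*\<mu> - D = (\<mu>-z1)*(\<mu>-z2)*(\<mu>-z3)"
proof -
  have "(z1-z2)*(z1^2+z1*z2+z2^2 - A*(z1+z2) + B) = 0"
    using r1 r2 by (simp add: algebra_simps power2_eq_square power3_eq_cube)
  hence e12: "z1^2+z1*z2+z2^2 - A*(z1+z2) + B = 0" using assms by simp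
  have "(z1-z3)*(z1^2+z1*z3+z3^2 - A*(z1+z3) + B) = 0"
    using r1 r3 by (simp add: algebra_simps power2_eq_square power3_eq_cube)
  hence e13: "z1^2+z1*z3+z3^2 - A*(z1+z3) + B = 0" using assms by simp
  have "(z2-z3)*(z1+z2+z3-A) = 0" using e12 e13
    by (simp add: algebra_simps power2_eq_square)
  hence hA: "A = z1+z2+z3" using assms by simp
  have hB: "B = z1*z2+z1*z3+z2*z3" using e12 hA by (simp add: algebra_simps power2_eq_square)
  have hD: "D = z1*z2*z3" using r1 hA hB by (simp add: algebra_simps power2_eq_square power3_eq_cube)
  show ?thesis unfolding hA hB hD by (simp add: algebra_simps power2_eq_square power3_eq_cube)
qed

lemma sorted_unique:
  fixes z1 z2 z3 l1 l2 l3 :: real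
  assumes "z1 < z2" "z2 < z3" "l1 \<le> l2" "l2 \<le> l3"
    and "\<forall>\<mu>. (\<mu>-z1)*(\<mu>-z2)*(\<mu>-z3) = (\<mu>-l1)*(\<mu>-l2)*(\<mu>-l3)"
  shows "l1 = z1 \<and> l2 = z2 \<and> l3 = z3"
proof -
  have "(z1-l1)*(z1-l2)*(z1-l3) = 0" using assms(5)[rule_format, of z1] by simp
  hence a1: "z1 = l1 \<or> z1 = l2 \<or> z1 = l3" by simp
  have "(z2-l1)*(z2-l2)*(z2-l3) = 0" using assms(5)[rule_format, of z2] by simp
  hence a2: "z2 = l1 \<or> z2 = l2 \<or> z2 = l3" by simp
  have "(z3-l1)*(z3-l2)*(z3-l3) = 0" using assms(5)[rule_format, of z3] by simp
  hence a3: "z3 = l1 \<or> z3 = l2 \<or> z3 = l3" by simp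
  show ?thesis using a1 a2 a3 assms(1-4) by auto
qed

lemma eigs_eq:
  assumes "\<forall>\<mu>. det (mat \<mu> - M) = (\<mu>-z1)*(\<mu>-z2)*(\<mu>-z3)" "z1 < z2" "z2 < z3"
  shows "eigs M = (z1, z2, z3)"
  unfolding eigs_def
proof (rule the_equality)
  show "case (z1, z2, z3) of (l1, l2, l3) \<Rightarrow> l1 \<le> l2 \<and> l2 \<le> l3 \<and>
       (\<forall>\<mu>. det (mat \<mu> - M) = (\<mu> - l1) * (\<mu> - l2) * (\<mu> - l3))" using assms by auto
next
  fix p assume "case p of (l1, l2, l3) \<Rightarrow> l1 \<le> l2 \<and> l2 \<le> l3 \<and>
       (\<forall>\<mu>. det (mat \<mu> - M) = (\<mu> - l1) * (\<mu> - l2) * (\<mu> - l3))"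
  then obtain l1 l2 l3 where p: "p = (l1,l2,l3)" "l1 \<le> l2" "l2 \<le> l3"
     "\<forall>\<mu>. det (mat \<mu> - M) = (\<mu> - l1) * (\<mu> - l2) * (\<mu> - l3)" by (cases p) auto
  have "l1 = z1 \<and> l2 = z2 \<and> l3 = z3"
    by (rule sorted_unique) (use assms p in auto)
  thus "p = (z1,z2,z3)" using p by simp
qed

lemma CP_vals:
  "CP x y 0 = -4*x^3+27*y^2"
  "CP x y (x^2) = 2*x^3 - x^4 + y^2*(27-9*x^2)"
  "CP x y x = 3*x^2 - 3*x^3 + x^4 + 27*y^2 - 9*x*y^2"
  "CP x y (3*x) = -9*x^2 + 11*x^3 - 3*x^4 + 27*y^2*(1-x)"
  "CP x y 2 = -4 + 4*x + 9*y^2"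
  "CP x y 5 = 50 - 20*x - 15*x^2 + 6*x^3 - 18*y^2"
  by (simp_all add: CP_def algebra_simps power2_eq_square power3_eq_cube power4_eq_xxxx)

lemma CP_signs:
  fixes x y :: real
  assumes x0: "0 < x" and x1: "x \<le> 1/10" and d: "27*y^2 \<le> 4*x^3"
  shows "CP x y 0 \<le> 0" "CP x y (x^2) > 0" "CP x y x > 0" "CP x y (3*x) < 0"
    "CP x y 2 < 0" "CP x y 5 > 0"
proof -
  have y0: "0 \<le> y^2" by simp
  have x3: "x^3 \<le> x^2 / 10" using x0 x1 by (simp add: power2_eq_square power3_eq_cube mult_left_mono)
  have x2: "x^2 \<le> x/10" using x0 x1 by (simp add: power2_eq_square)
  have x4: "x^4 \<le> x^3/10" using x0 x1 by (simp add: power3_eq_cube power4_eq_xxxx mult_left_mono)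
  have x2p: "0 < x^2" "0 < x^3" "0 < x^4" using x0 by auto
  show "CP x y 0 \<le> 0" using d by (simp add: CP_vals)
  have "0 \<le> y^2*(27-9*x^2)" using x2 x1 by (intro mult_nonneg_nonneg) auto
  thus "CP x y (x^2) > 0" using x4 x2p unfolding CP_vals by linarith
  have "9*x*y^2 \<le> 27*y^2" using x1 by (intro mult_right_mono) auto
  thus "CP x y x > 0" using x3 x2p unfolding CP_vals by linarith
  have "27*y^2*(1-x) \<le> 27*y^2" using x0 by (simp add: mult_left_le)
  thus "CP x y (3*x) < 0" using x3 x2p d unfolding CP_vals by linarith
  show "CP x y 2 < 0" using x1 d x3 x2 unfolding CP_vals by linarith
  show "CP x y 5 > 0" using x1 d x3 x2 x2p unfolding CP_vals by linarith
qed

lemma roots_loc: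
  fixes x y :: real
  assumes x0: "0 < x" and x1: "x \<le> 1/10" and d: "27*y^2 \<le> 4*x^3"
  obtains z1 z2 z3 where "0 \<le> z1" "z1 < x^2" "x < z2" "z2 < 3*x" "2 < z3" "z3 < 5"
    "eigs (Smat x y) = (z1, z2, z3)" "\<forall>\<mu>. CP x y \<mu> = (\<mu>-z1)*(\<mu>-z2)*(\<mu>-z3)"
proof -
  note s = CP_signs[OF assms]
  have cont: "continuous_on S (CP x y)" for S unfolding CP_def by (intro continuous_intros)
  have x2: "x^2 < x" using x0 x1 by (simp add: power2_eq_square)
  obtain z1 where z1: "0 \<le> z1" "z1 \<le> x^2" "CP x y z1 = 0"
    using IVT'[of "CP x y" 0 0 "x^2", OF s(1) less_imp_le[OF s(2)] _ cont] by auto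
  obtain z2 where z2: "x \<le> z2" "z2 \<le> 3*x" "CP x y z2 = 0"
    using IVT2'[of "CP x y" "3*x" 0 x, OF less_imp_le[OF s(4)] less_imp_le[OF s(3)] _ cont] x0 by auto
  obtain z3 where z3: "2 \<le> z3" "z3 \<le> 5" "CP x y z3 = 0"
    using IVT'[of "CP x y" 2 0 5, OF less_imp_le[OF s(5)] less_imp_le[OF s(6)] _ cont] by auto
  have "z1 \<noteq> x^2" using z1 s(2) by auto
  hence z1': "z1 < x^2" using z1 by simp
  have "z2 \<noteq> x" "z2 \<noteq> 3*x" using z2 s(3,4) by auto
  hence z2': "x < z2" "z2 < 3*x" using z2 by auto
  have "z3 \<noteq> 2" "z3 \<noteq> 5" using z3 s(5,6) by auto
  hence z3': "2 < z3" "z3 < 5" using z3 by auto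
  have lt: "z1 < z2" "z2 < z3" using z1' z2' z3' x2 x1 by auto
  have fac: "\<forall>\<mu>. CP x y \<mu> = (\<mu>-z1)*(\<mu>-z2)*(\<mu>-z3)"
  proof
    fix \<mu>
    show "CP x y \<mu> = (\<mu>-z1)*(\<mu>-z2)*(\<mu>-z3)"
      unfolding CP_def
      by (rule cubic_factor) (use z1(3) z2(3) z3(3) lt in \<open>simp_all add: CP_def\<close>)
  qed
  have "eigs (Smat x y) = (z1, z2, z3)"
    by (rule eigs_eq) (use fac lt in \<open>simp_all add: charpoly\<close>)
  thus ?thesis using that z1(1) z1' z2' z3' fac by blast
qed

lemma ev_nhds: "eventually P (at t) \<Longrightarrow> P t \<Longrightarrow> eventually P (nhds t)"
  unfolding eventually_at_filter by (erule eventually_mono) auto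

lemma root_cont:
  fixes P :: "real \<Rightarrow> real \<Rightarrow> real" and r u v :: "real \<Rightarrow> real"
  assumes ev: "eventually (\<lambda>s. \<forall>\<mu>. P s \<mu> = (\<mu> - r s)*(\<mu> - u s)*(\<mu> - v s)) (nhds t)"
    and cP: "isCont (\<lambda>s. P s (r t)) t"
    and lb: "eventually (\<lambda>s. c \<le> \<bar>(r t - u s)*(r t - v s)\<bar>) (nhds t)" and c: "c > 0"
  shows "isCont r t"
proof -
  have P0: "P t (r t) = 0" using eventually_nhds_x_imp_x[OF ev] by simp
  have "((\<lambda>s. P s (r t)) \<longlongrightarrow> 0) (at t)" using cP P0 by (simp add: isCont_def)
  hence g: "((\<lambda>s. \<bar>P s (r t)\<bar> / c) \<longlongrightarrow> 0) (at t)"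
    by (metis (no_types) tendsto_divide_zero tendsto_rabs_zero)
  have "eventually (\<lambda>s. norm (r s - r t) \<le> \<bar>P s (r t)\<bar> / c) (at t)"
  proof -
    have "eventually (\<lambda>s. norm (r s - r t) \<le> \<bar>P s (r t)\<bar> / c) (nhds t)"
      using ev lb
    proof eventually_elim
      case (elim s)
      have e: "P s (r t) = (r t - r s) * ((r t - u s)*(r t - v s))" using elim(1)[rule_format, of "r t"] by (simp add: algebra_simps)
      have "\<bar>r s - r t\<bar> * c \<le> \<bar>r s - r t\<bar> * \<bar>(r t - u s)*(r t - v s)\<bar>"
        using elim(2) by (simp add: mult_left_mono)
      also have "\<dots> = \<bar>P s (r t)\<bar>" unfolding e by (simp add: abs_mult abs_minus_commute)
      finally show ?case using c by (simp add: field_simps)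
    qed
    thus ?thesis unfolding eventually_at_filter by (rule eventually_mono) auto
  qed
  hence "((\<lambda>s. r s - r t) \<longlongrightarrow> 0) (at t)" using g by (rule Lim_null_comparison)
  thus ?thesis by (simp add: isCont_def LIM_zero_iff)
qed

lemma root_deriv:
  fixes P :: "real \<Rightarrow> real \<Rightarrow> real" and r u v :: "real \<Rightarrow> real"
  assumes ev: "eventually (\<lambda>s. \<forall>\<mu>. P s \<mu> = (\<mu> - r s)*(\<mu> - u s)*(\<mu> - v s)) (nhds t)"
    and dP: "((\<lambda>s. P s (r t)) has_real_derivative Pd) (at t)"
    and cu: "isCont u t" and cv: "isCont v t"
    and nz: "(r t - u t)*(r t - v t) \<noteq> 0"
  shows "(r has_real_derivative (- Pd / ((r t - u t)*(r t - v t)))) (at t)"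
proof -
  define Q where "Q s = (r t - u s)*(r t - v s)" for s
  have P0: "P t (r t) = 0" using eventually_nhds_x_imp_x[OF ev] by simp
  have cQ: "isCont Q t" unfolding Q_def using cu cv by (intro continuous_intros)
  hence Ql: "(Q \<longlongrightarrow> Q t) (at t)" by (simp add: isCont_def)
  have "eventually (\<lambda>s. Q s \<noteq> 0) (at t)"
    using tendsto_imp_eventually_ne[OF Ql, of 0] nz by (simp add: Q_def)
  moreover have "eventually (\<lambda>s. \<forall>\<mu>. P s \<mu> = (\<mu> - r s)*(\<mu> - u s)*(\<mu> - v s)) (at t)"
    using ev unfolding eventually_at_filter by (rule eventually_mono) auto
  ultimately have evq: "eventually (\<lambda>s. (r s - r t)/(s - t) = - ((P s (r t) - P t (r t))/(s-t)) / Q s) (at t)"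
  proof eventually_elim
    case (elim s)
    have e: "P s (r t) = (r t - r s) * Q s" using elim(2)[rule_format, of "r t"]
      by (simp add: algebra_simps Q_def)
    show ?case using elim(1) unfolding e P0 by (cases "s = t") (simp_all add: field_simps)
  qed
  have "((\<lambda>s. (P s (r t) - P t (r t))/(s-t)) \<longlongrightarrow> Pd) (at t)"
    using dP by (simp add: has_field_derivative_iff)
  hence "((\<lambda>s. - ((P s (r t) - P t (r t))/(s-t)) / Q s) \<longlongrightarrow> - Pd / Q t) (at t)"
    using nz by (intro tendsto_intros Ql) (auto simp: Q_def)
  hence "((\<lambda>s. (r s - r t)/(s - t)) \<longlongrightarrow> - Pd / Q t) (at t)"
    using tendsto_cong[OF evq] by simp
  thus ?thesis by (simp add: has_field_derivative_iff Q_def)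
qed

lemma partial_t:
  fixes f :: "real \<times> 'x::euclidean_space \<Rightarrow> real"
  assumes "f differentiable (at (t,X))"
  shows "((\<lambda>s. f (s,X)) has_real_derivative frechet_derivative f (at (t,X)) (1,0)) (at t)"
proof -
  define F where "F = frechet_derivative f (at (t,X))"
  have F: "(f has_derivative F) (at (t,X))" using assms unfolding F_def by (rule frechet_derivative_works[THEN iffD1])
  have g: "((\<lambda>s. (s,X)) has_derivative (\<lambda>h. (h,0))) (at t)"
    by (intro derivative_eq_intros) auto
  have c: "((\<lambda>s. f (s,X)) has_derivative (\<lambda>h. F (h,0))) (at t)"
    using diff_chain_at[OF g, of f F] F by (simp add: o_def)
  have lin: "linear F" using F by (rule has_derivative_linear)
  have "F (h,0) = F (1,0) * h" for h
  proof -
    have "F (h,0) = F (h *\<^sub>R (1,0))" by simp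
    also have "\<dots> = h *\<^sub>R F (1,0)" using lin by (rule linear_scale)
    finally show ?thesis by simp
  qed
  hence eq: "(\<lambda>h. F (h,0)) = (\<lambda>h. F (1,0) * h)" by (intro ext) assumption
  have "((\<lambda>s. f (s,X)) has_derivative (\<lambda>h. F (1,0) * h)) (at t)" using c unfolding eq .
  thus ?thesis unfolding has_field_derivative_def F_def by simp
qed

lemma smooth_ext:
  fixes f :: "real \<times> 'x::euclidean_space \<Rightarrow> real"
  assumes "smooth_bdd_on \<Omega> f"
  shows "\<forall>p\<in>\<Omega>. f differentiable (at p)"
    "\<forall>p\<in>\<Omega>. dderiv [(1,0)] f differentiable (at p)"
    "\<exists>L. \<forall>p\<in>\<Omega>. \<bar>dderiv [(1,0)] f p\<bar> \<le> L"
    "\<exists>M. \<forall>p\<in>\<Omega>. \<bar>dderiv [(1,0),(1,0)] f p\<bar> \<le> M"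
proof -
  have B: "(1::real, 0::'x) \<in> Basis" by (simp add: Basis_prod_def)
  have "set ([]::(real\<times>'x) list) \<subseteq> Basis" by simp
  hence h0: "(\<forall>p\<in>\<Omega>. dderiv [] f differentiable (at p))" using assms[unfolded smooth_bdd_on_def, rule_format, of "[]"]
    by simp
  thus "\<forall>p\<in>\<Omega>. f differentiable (at p)" by simp
  have "set [(1::real, 0::'x)] \<subseteq> Basis" using B by simp
  hence h1: "(\<forall>p\<in>\<Omega>. dderiv [(1,0)] f differentiable (at p)) \<and> bounded (dderiv [(1,0)] f ` \<Omega>)"
    using assms[unfolded smooth_bdd_on_def, rule_format, of "[(1,0)]"] by simp
  thus "\<forall>p\<in>\<Omega>. dderiv [(1,0)] f differentiable (at p)" by (rule conjunct1)
  from h1 obtain L where "\<forall>y\<in>dderiv [(1,0)] f ` \<Omega>. norm y \<le> L" unfolding bounded_iff by blast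
  thus "\<exists>L. \<forall>p\<in>\<Omega>. \<bar>dderiv [(1,0)] f p\<bar> \<le> L" by auto
  have "set [(1::real, 0::'x),(1,0)] \<subseteq> Basis" using B by simp
  hence "bounded (dderiv [(1,0),(1,0)] f ` \<Omega>)"
    using assms[unfolded smooth_bdd_on_def, rule_format, of "[(1,0),(1,0)]"] by simp
  then obtain M where "\<forall>y\<in>dderiv [(1,0),(1,0)] f ` \<Omega>. norm y \<le> M" unfolding bounded_iff by blast
  thus "\<exists>M. \<forall>p\<in>\<Omega>. \<bar>dderiv [(1,0),(1,0)] f p\<bar> \<le> M" by auto
qed

lemma lip_bound:
  fixes g g1 :: "real \<Rightarrow> real"
  assumes "0 < h" "\<forall>s\<in>{t..t+h}. (g has_real_derivative g1 s) (at s)" "\<forall>s\<in>{t..t+h}. \<bar>g1 s\<bar> \<le> L"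
  shows "\<bar>g (t+h) - g t\<bar> \<le> L * h"
proof -
  obtain z where z: "t < z" "z < t+h" "g (t+h) - g t = (t+h-t) * g1 z"
    using MVT2[of t "t+h" g g1] assms by auto
  have "\<bar>g1 z\<bar> \<le> L" using assms(3) z by auto
  thus ?thesis using z(3) assms(1) by (simp add: abs_mult mult.commute mult_left_mono)
qed

lemma taylor2:
  fixes g g1 g2 :: "real \<Rightarrow> real"
  assumes h: "0 < h" and d1: "\<forall>s\<in>{t..t+h}. (g has_real_derivative g1 s) (at s)"
    and d2: "\<forall>s\<in>{t..t+h}. (g1 has_real_derivative g2 s) (at s)" and b: "\<forall>s\<in>{t..t+h}. \<bar>g2 s\<bar> \<le> M"
  shows "\<bar>g (t+h) - g t - h * g1 t\<bar> \<le> M * h^2"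
proof -
  have dpsi: "((\<lambda>s. g s - s * g1 t) has_real_derivative (g1 s - g1 t)) (at s)" if "s \<in> {t..t+h}" for s
    using d1 that by (auto intro!: derivative_eq_intros)
  obtain z where z: "t < z" "z < t+h" "(g (t+h) - (t+h) * g1 t) - (g t - t * g1 t) = (t+h-t) * (g1 z - g1 t)"
    using MVT2[of t "t+h" "\<lambda>s. g s - s * g1 t" "\<lambda>s. g1 s - g1 t"] dpsi h by auto
  have "\<bar>g1 (t + (z-t)) - g1 t\<bar> \<le> M * (z-t)"
    by (rule lip_bound) (use z d2 b in auto)
  moreover have "\<bar>g2 t\<bar> \<le> M" using b h by simp
  hence "0 \<le> M" by linarith
  hence "M * (z-t) \<le> M * h" using z by (intro mult_left_mono) auto
  ultimately have "\<bar>g1 z - g1 t\<bar> \<le> M * h" by simp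
  have e: "g (t+h) - g t - h * g1 t = h * (g1 z - g1 t)" using z(3) by (simp add: algebra_simps)
  have "\<bar>h * (g1 z - g1 t)\<bar> = h * \<bar>g1 z - g1 t\<bar>" using h by (simp add: abs_mult)
  also have "\<dots> \<le> h * (M * h)" using h \<open>\<bar>g1 z - g1 t\<bar> \<le> M * h\<close> by (intro mult_left_mono) auto
  also have "\<dots> = M * h^2" by (simp add: power2_eq_square)
  finally show ?thesis unfolding e .
qed

lemma bb_bound:
  fixes \<alpha> \<alpha>1 \<beta> \<beta>1 \<beta>2 :: "real \<Rightarrow> real"
  assumes h0: "0 < \<alpha> t" "\<alpha> t \<le> 1/10"
    and d\<alpha>: "\<forall>s\<in>{t..t+\<alpha> t}. (\<alpha> has_real_derivative \<alpha>1 s) (at s) \<and> \<bar>\<alpha>1 s\<bar> \<le> La"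
    and d\<beta>: "\<forall>s\<in>{t..t+\<alpha> t}. (\<beta> has_real_derivative \<beta>1 s) (at s) \<and> (\<beta>1 has_real_derivative \<beta>2 s) (at s) \<and> \<bar>\<beta>2 s\<bar> \<le> Mb"
    and pos: "\<forall>s\<in>{t..t+\<alpha> t}. 0 < \<alpha> s \<and> 27*(\<beta> s)^2 \<le> 4*(\<alpha> s)^3"
  shows "\<bar>\<beta> t * \<beta>1 t\<bar> \<le> ((1+La)^2 + 1 + Mb) * (\<alpha> t)^2"
proof -
  define h where "h = \<alpha> t"
  define \<sigma> where "\<sigma> = sqrt h"
  have hpos: "0 < h" using h0 by (simp add: h_def)
  have s0: "0 < \<sigma>" using hpos by (simp add: \<sigma>_def)
  have hs: "h = \<sigma>^2" using hpos by (simp add: \<sigma>_def)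
  have s1: "\<sigma> \<le> 1" using h0 by (simp add: \<sigma>_def h_def)
  have tt: "t \<in> {t..t+\<alpha> t}" "t + h \<in> {t..t+\<alpha> t}" using hpos by (auto simp: h_def)
  have La0: "0 \<le> La" using d\<alpha> tt(1) by (meson abs_ge_zero order_trans)
  have Mb0: "0 \<le> Mb" using d\<beta> tt(1) by (meson abs_ge_zero order_trans)
  have tay: "\<bar>\<beta> (t+h) - \<beta> t - h * \<beta>1 t\<bar> \<le> Mb * h^2"
    by (rule taylor2[where ?g2.0=\<beta>2]) (use hpos d\<beta> in \<open>auto simp: h_def\<close>)
  have lip: "\<bar>\<alpha> (t+h) - \<alpha> t\<bar> \<le> La * h"
    by (rule lip_bound) (use hpos d\<alpha> in \<open>auto simp: h_def\<close>)
  have a1: "\<alpha> (t+h) \<le> (1+La) * h" using lip by (simp add: h_def algebra_simps abs_le_iff)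
  have a1p: "0 < \<alpha> (t+h)" using pos tt(2) by blast
  have bt: "\<bar>\<beta> t\<bar> \<le> \<sigma>^3"
  proof -
    have "(\<beta> t)^2 \<le> (\<alpha> t)^3" using pos tt(1) h0 by (smt (verit) zero_less_power)
    also have "\<dots> = (\<sigma>^3)^2" unfolding h_def[symmetric] hs by (simp add: power_mult[symmetric])
    finally have "\<bar>\<beta> t\<bar>^2 \<le> (\<sigma>^3)^2" by simp
    thus ?thesis by (rule power2_le_imp_le) (use s0 in simp)
  qed
  have bth: "\<bar>\<beta> (t+h)\<bar> \<le> (1+La)^2 * \<sigma>^3"
  proof -
    have "(\<beta> (t+h))^2 \<le> (\<alpha> (t+h))^3" using pos tt(2) a1p by (smt (verit) zero_less_power)
    also have "\<dots> \<le> ((1+La)*h)^3" using a1 a1p by (intro power_mono) auto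
    also have "\<dots> = (1+La)^3 * h^3" by (simp add: power_mult_distrib)
    also have "\<dots> \<le> (1+La)^4 * h^3" using La0 hpos
      by (intro mult_right_mono power_increasing) auto
    also have "\<dots> = ((1+La)^2 * \<sigma>^3)^2" unfolding hs by (simp add: power_mult_distrib power_mult[symmetric])
    finally have "\<bar>\<beta> (t+h)\<bar>^2 \<le> ((1+La)^2 * \<sigma>^3)^2" by simp
    thus ?thesis by (rule power2_le_imp_le) (use s0 in simp)
  qed
  have "h * \<bar>\<beta>1 t\<bar> \<le> \<bar>\<beta> (t+h)\<bar> + \<bar>\<beta> t\<bar> + Mb * h^2"
    using tay hpos by (simp add: abs_le_iff abs_mult) linarith
  also have "\<dots> \<le> (1+La)^2 * \<sigma>^3 + \<sigma>^3 + Mb * \<sigma>^3 * \<sigma>"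
    using bth bt by (simp add: hs power_mult[symmetric]) (simp add: power_def)
  also have "\<dots> \<le> (1+La)^2 * \<sigma>^3 + \<sigma>^3 + Mb * \<sigma>^3"
    using s1 s0 Mb0 by (simp add: mult_left_le)
  finally have "\<sigma>^2 * \<bar>\<beta>1 t\<bar> \<le> \<sigma>^2 * (\<sigma> * ((1+La)^2 + 1 + Mb))"
    unfolding hs by (simp add: algebra_simps power2_eq_square power3_eq_cube)
  hence b1: "\<bar>\<beta>1 t\<bar> \<le> \<sigma> * ((1+La)^2 + 1 + Mb)" using s0 by simp
  have "\<bar>\<beta> t * \<beta>1 t\<bar> = \<bar>\<beta> t\<bar> * \<bar>\<beta>1 t\<bar>" by (simp add: abs_mult)
  also have "\<dots> \<le> \<sigma>^3 * (\<sigma> * ((1+La)^2 + 1 + Mb))" using bt b1 s0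
    by (intro mult_mono) auto
  also have "\<dots> = ((1+La)^2 + 1 + Mb) * (\<alpha> t)^2" unfolding h_def[symmetric] hs
    by (simp add: power_def)
  finally show ?thesis .
qed

lemma good_roots:
  assumes "0 < x" "x \<le> 1/10" "27*y^2 \<le> 4*x^3"
  shows "0 \<le> lam1 (Smat x y) \<and> lam1 (Smat x y) < x^2 \<and> x < lam2 (Smat x y) \<and>
    lam2 (Smat x y) < 3*x \<and> 2 < lam3 (Smat x y) \<and> lam3 (Smat x y) < 5 \<and>
    (\<forall>\<mu>. CP x y \<mu> = (\<mu> - lam1 (Smat x y))*(\<mu> - lam2 (Smat x y))*(\<mu> - lam3 (Smat x y)))"
  by (rule roots_loc[OF assms]) (simp add: lam1_def lam2_def lam3_def)

definition PD :: "real \<Rightarrow> real \<Rightarrow> real \<Rightarrow> real \<Rightarrow> real \<Rightarrow> real" where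
  "PD x y x1 y1 z = -(2*x1+2*x*x1)*z^2 + (6*x1+4*x*x1+6*x^2*x1-18*(y*y1))*z - (12*x^2*x1-54*(y*y1))"

lemma CP_deriv:
  assumes "(\<alpha> has_real_derivative x1) (at t)" "(\<beta> has_real_derivative y1) (at t)"
  shows "((\<lambda>s. CP (\<alpha> s) (\<beta> s) z) has_real_derivative PD (\<alpha> t) (\<beta> t) x1 y1 z) (at t)"
  unfolding CP_def
  apply (rule derivative_eq_intros assms refl)+
  apply (simp add: PD_def algebra_simps power2_eq_square power3_eq_cube)
  done

lemma tri3: "\<bar>-p + q - r\<bar> \<le> \<bar>p\<bar> + \<bar>q\<bar> + \<bar>r::real\<bar>" by linarith

lemma PD_tri: "\<bar>PD x y x1 y1 z\<bar> \<le> \<bar>2*x1+2*x*x1\<bar>*z^2 + \<bar>6*x1+4*x*x1+6*x^2*x1-18*(y*y1)\<bar>*\<bar>z\<bar> + \<bar>12*x^2*x1-54*(y*y1)\<bar>"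
  unfolding PD_def minus_mult_left[symmetric]
  using tri3[of "(2*x1+2*x*x1)*z^2" "(6*x1+4*x*x1+6*x^2*x1-18*(y*y1))*z" "12*x^2*x1-54*(y*y1)"]
  by (simp only: abs_mult abs_power2)

lemma PD_bounds:
  assumes x1: "\<bar>x1\<bar> \<le> L" and w: "\<bar>y*y1\<bar> \<le> K*x^2" and x0: "0 < x" and xs: "x \<le> 1/10"
  shows "0 \<le> z \<Longrightarrow> z \<le> x^2 \<Longrightarrow> \<bar>PD x y x1 y1 z\<bar> \<le> (22*L+72*K)*x^2"
    and "x \<le> z \<Longrightarrow> z \<le> 3*x \<Longrightarrow> \<bar>PD x y x1 y1 z\<bar> \<le> (25*L+60*K)*x"
    and "2 \<le> z \<Longrightarrow> z \<le> 5 \<Longrightarrow> \<bar>PD x y x1 y1 z\<bar> \<le> 122*L+144*K"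
proof -
  define w where "w = y*y1"
  have L0: "0 \<le> L" using x1 by linarith
  have K0: "0 \<le> K" using w x0
    by (metis abs_ge_zero not_le order_trans zero_less_power mult_neg_pos)
  have x2: "x^2 \<le> x/10" "0 < x^2" using x0 xs by (auto simp: power2_eq_square)
  have x2': "x^2 \<le> 1" using x2 xs by linarith
  have cA: "\<bar>2*x1+2*x*x1\<bar> \<le> 3*L"
  proof -
    have "2*x1+2*x*x1 = x1*(2+2*x)" by (simp add: algebra_simps)
    hence "\<bar>2*x1+2*x*x1\<bar> = \<bar>x1\<bar> * \<bar>2+2*x\<bar>" by (simp only: abs_mult)
    also have "\<dots> \<le> L * 3" using x1 x0 xs by (intro mult_mono) auto
    finally show ?thesis by simp
  qed
  have cB: "\<bar>6*x1+4*x*x1+6*x^2*x1-18*w\<bar> \<le> 7*L + 18*K*x^2"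
  proof -
    have e: "6*x1+4*x*x1+6*x^2*x1-18*w = x1*(6+4*x+6*x^2) - 18*w" by (simp add: algebra_simps)
    have "\<bar>x1*(6+4*x+6*x^2) - 18*w\<bar> \<le> \<bar>x1*(6+4*x+6*x^2)\<bar> + \<bar>18*w\<bar>" by (rule abs_triangle_ineq4)
    hence a: "\<bar>6*x1+4*x*x1+6*x^2*x1-18*w\<bar> \<le> \<bar>x1\<bar> * \<bar>6+4*x+6*x^2\<bar> + 18*\<bar>w\<bar>"
      unfolding e by (simp only: abs_mult)
    have "0 \<le> 6+4*x+6*x^2" "6+4*x+6*x^2 \<le> 7" using x0 xs x2 by linarith+
    hence b: "\<bar>6+4*x+6*x^2\<bar> \<le> 7" by simp
    have c: "\<bar>x1\<bar> * \<bar>6+4*x+6*x^2\<bar> \<le> L * 7" using x1 b by (intro mult_mono) auto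
    show ?thesis using a c w unfolding w_def by linarith
  qed
  have cD: "\<bar>12*x^2*x1-54*w\<bar> \<le> (12*L+54*K)*x^2"
  proof -
    have a: "\<bar>12*x^2*x1-54*w\<bar> \<le> \<bar>12*x^2*x1\<bar> + \<bar>54*w\<bar>" by (rule abs_triangle_ineq4)
    have b: "\<bar>12*x^2*x1\<bar> = 12*x^2*\<bar>x1\<bar>" "\<bar>54*w\<bar> = 54*\<bar>w\<bar>" by (simp_all add: abs_mult)
    have c: "12*x^2*\<bar>x1\<bar> \<le> 12*x^2*L" using x1 by (intro mult_left_mono) auto
    have "\<bar>12*x^2*x1-54*w\<bar> \<le> 12*x^2*L + 54*(K*x^2)" using a b c w unfolding w_def by linarith
    thus ?thesis by (simp add: algebra_simps)
  qed
  note tri = PD_tri[of x y x1 y1 z, folded w_def]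
  show "0 \<le> z \<Longrightarrow> z \<le> x^2 \<Longrightarrow> \<bar>PD x y x1 y1 z\<bar> \<le> (22*L+72*K)*x^2"
  proof -
    assume z: "0 \<le> z" "z \<le> x^2"
    have "z*z \<le> z*1" using z x2' by (intro mult_left_mono) auto
    hence z2: "z^2 \<le> x^2" using z by (simp add: power2_eq_square)
    have "\<bar>2*x1+2*x*x1\<bar>*z^2 \<le> 3*L*x^2" using cA z2 L0 by (intro mult_mono) auto
    moreover have "\<bar>6*x1+4*x*x1+6*x^2*x1-18*w\<bar>*\<bar>z\<bar> \<le> (7*L + 18*K)*x^2"
    proof -
      have "7*L + 18*K*x^2 \<le> 7*L + 18*K" using K0 x2' by (simp add: mult_left_le)
      hence "\<bar>6*x1+4*x*x1+6*x^2*x1-18*w\<bar> \<le> 7*L + 18*K" using cB by linarith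
      thus ?thesis using z L0 K0 by (intro mult_mono) auto
    qed
    moreover have "(22*L+72*K)*x^2 = 3*L*x^2 + (7*L + 18*K)*x^2 + (12*L+54*K)*x^2" by (simp add: algebra_simps)
    ultimately show ?thesis using tri cD z by linarith
  qed
  show "x \<le> z \<Longrightarrow> z \<le> 3*x \<Longrightarrow> \<bar>PD x y x1 y1 z\<bar> \<le> (25*L+60*K)*x"
  proof -
    assume z: "x \<le> z" "z \<le> 3*x"
    have "z*z \<le> (3*x)*(3*x)" using z x0 by (intro mult_mono) auto
    hence z2: "z^2 \<le> x * (9/10)" using x2 by (simp add: power2_eq_square)
    have "\<bar>2*x1+2*x*x1\<bar>*z^2 \<le> 3*L*(x*(9/10))" using cA z2 L0 by (intro mult_mono) auto
    moreover have "\<bar>6*x1+4*x*x1+6*x^2*x1-18*w\<bar>*\<bar>z\<bar> \<le> (7*L + 18*K)*(3*x)"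
    proof -
      have "7*L + 18*K*x^2 \<le> 7*L + 18*K" using K0 x2' by (simp add: mult_left_le)
      hence "\<bar>6*x1+4*x*x1+6*x^2*x1-18*w\<bar> \<le> 7*L + 18*K" using cB by linarith
      thus ?thesis using z L0 K0 x0 by (intro mult_mono) auto
    qed
    moreover have "(12*L+54*K)*x^2 \<le> (12*L+54*K)*(x/10)" using x2 L0 K0 by (intro mult_left_mono) auto
    moreover have "3*L*(x*(9/10)) + (7*L + 18*K)*(3*x) + (12*L+54*K)*(x/10) \<le> (25*L+60*K)*x"
    proof -
      have lx: "0 \<le> L*x" "0 \<le> K*x" using L0 K0 x0 by simp_all
      have "3*L*(x*(9/10)) + (7*L + 18*K)*(3*x) + (12*L+54*K)*(x/10) = (249/10)*(L*x) + (297/5)*(K*x)"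
        by (simp add: algebra_simps)
      moreover have "(25*L+60*K)*x = 25*(L*x)+60*(K*x)" by (simp add: algebra_simps)
      ultimately show ?thesis using lx by linarith
    qed
    ultimately show ?thesis using tri cD z x0 by linarith
  qed
  show "2 \<le> z \<Longrightarrow> z \<le> 5 \<Longrightarrow> \<bar>PD x y x1 y1 z\<bar> \<le> 122*L+144*K"
  proof -
    assume z: "2 \<le> z" "z \<le> 5"
    have "z*z \<le> 5*5" using z by (intro mult_mono) auto
    hence z2: "z^2 \<le> 25" by (simp add: power2_eq_square)
    have "\<bar>2*x1+2*x*x1\<bar>*z^2 \<le> 3*L*25" using cA z2 L0 by (intro mult_mono) auto
    moreover have "\<bar>6*x1+4*x*x1+6*x^2*x1-18*w\<bar>*\<bar>z\<bar> \<le> (7*L + 18*K)*5"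
    proof -
      have "7*L + 18*K*x^2 \<le> 7*L + 18*K" using K0 x2' by (simp add: mult_left_le)
      hence "\<bar>6*x1+4*x*x1+6*x^2*x1-18*w\<bar> \<le> 7*L + 18*K" using cB by linarith
      thus ?thesis using z L0 K0 by (intro mult_mono) auto
    qed
    moreover have "(12*L+54*K)*x^2 \<le> (12*L+54*K)*1" using x2' L0 K0 by (intro mult_left_mono) auto
    moreover have "3*L*25 + (7*L + 18*K)*5 + (12*L+54*K)*1 = 122*L+144*K" by (simp add: algebra_simps)
    ultimately show ?thesis using tri cD z by linarith
  qed
qed

lemma prod_lb: "a \<le> \<bar>x\<bar> \<Longrightarrow> b \<le> \<bar>y\<bar> \<Longrightarrow> 0 \<le> a \<Longrightarrow> 0 \<le> b \<Longrightarrow> a*b \<le> \<bar>x*(y::real)\<bar>"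
  by (simp add: abs_mult mult_mono)

lemma div_bd: "\<bar>p\<bar> \<le> B \<Longrightarrow> c \<le> \<bar>q\<bar> \<Longrightarrow> 0 < c \<Longrightarrow> \<bar>- p / (q::real)\<bar> \<le> B / c"
proof -
  assume a: "\<bar>p\<bar> \<le> B" "c \<le> \<bar>q\<bar>" "0 < c"
  have "\<bar>- p / q\<bar> = \<bar>p\<bar> / \<bar>q\<bar>" by (simp add: abs_divide)
  also have "\<dots> \<le> B / c" using a by (intro frac_le) auto
  finally show ?thesis .
qed

lemma pointwise:
  fixes \<alpha> \<alpha>1 \<beta> \<beta>1 \<beta>2 :: "real \<Rightarrow> real"
  assumes I: "\<forall>s\<in>{0<..<T}. (\<alpha> has_real_derivative \<alpha>1 s) (at s) \<and> \<bar>\<alpha>1 s\<bar> \<le> La \<and>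
       (\<beta> has_real_derivative \<beta>1 s) (at s) \<and> (\<beta>1 has_real_derivative \<beta>2 s) (at s) \<and> \<bar>\<beta>2 s\<bar> \<le> Mb \<and>
       0 < \<alpha> s \<and> 27*(\<beta> s)^2 \<le> 4*(\<alpha> s)^3"
    and t0: "0 < t" and tT0: "t < T" and tT: "t + \<alpha> t < T" and a10: "\<alpha> t < 1/10"
  shows "\<exists>D1 D2 D3. ((\<lambda>s. lam1 (Smat (\<alpha> s) (\<beta> s))) has_real_derivative D1) (at t) \<and>
    ((\<lambda>s. lam2 (Smat (\<alpha> s) (\<beta> s))) has_real_derivative D2) (at t) \<and>
    ((\<lambda>s. lam3 (Smat (\<alpha> s) (\<beta> s))) has_real_derivative D3) (at t) \<and>
    \<bar>D1\<bar> \<le> (200*La+200*((1+La)^2+1+Mb)+1) * \<alpha> t \<and>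
    \<bar>D2\<bar> \<le> (200*La+200*((1+La)^2+1+Mb)+1) \<and> \<bar>D3\<bar> \<le> (200*La+200*((1+La)^2+1+Mb)+1)"
proof -
  define K where "K = (1+La)^2+1+Mb"
  define C where "C = 200*La+200*K+1"
  define x where "x = \<alpha> t"
  have tin: "t \<in> {0<..<T}" using t0 tT0 by simp
  note It = I[rule_format, OF tin]
  have x0: "0 < x" and x1: "x < 1/10" using It a10 by (auto simp: x_def)
  have La0: "0 \<le> La" using It by linarith
  have Mb0: "0 \<le> Mb" using It by linarith
  have K0: "0 \<le> K" using Mb0 by (simp add: K_def)
  have sub: "{t..t+\<alpha> t} \<subseteq> {0<..<T}" using t0 tT by auto
  have bb: "\<bar>\<beta> t * \<beta>1 t\<bar> \<le> K * x^2" unfolding K_def x_def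
    by (rule bb_bound[where ?\<beta>2.0=\<beta>2]) (use x0 x1 I sub in \<open>auto simp: x_def\<close>)
  define r1 where "r1 s = lam1 (Smat (\<alpha> s) (\<beta> s))" for s
  define r2 where "r2 s = lam2 (Smat (\<alpha> s) (\<beta> s))" for s
  define r3 where "r3 s = lam3 (Smat (\<alpha> s) (\<beta> s))" for s
  define P where "P s \<mu> = CP (\<alpha> s) (\<beta> s) \<mu>" for s \<mu>
  have good: "0 \<le> r1 s \<and> r1 s < (\<alpha> s)^2 \<and> \<alpha> s < r2 s \<and> r2 s < 3 * \<alpha> s \<and> 2 < r3 s \<and> r3 s < 5 \<and>
     (\<forall>\<mu>. P s \<mu> = (\<mu> - r1 s)*(\<mu> - r2 s)*(\<mu> - r3 s))"
    if "s \<in> {0<..<T}" "\<alpha> s < 1/10" for s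
    unfolding r1_def r2_def r3_def P_def
    by (rule good_roots) (use I that in auto)
  have gt: "0 \<le> r1 t \<and> r1 t < x^2 \<and> x < r2 t \<and> r2 t < 3 * x \<and> 2 < r3 t \<and> r3 t < 5 \<and>
     (\<forall>\<mu>. P t \<mu> = (\<mu> - r1 t)*(\<mu> - r2 t)*(\<mu> - r3 t))" using good[OF tin] a10 by (simp add: x_def)
  have ca: "isCont \<alpha> t" using It by (blast intro: DERIV_isCont)
  hence "(\<alpha> \<longlongrightarrow> x) (at t)" by (simp add: isCont_def x_def)
  hence "eventually (\<lambda>s. \<alpha> s < 1/10 \<and> x/2 < \<alpha> s \<and> \<alpha> s < 2*x) (at t)"
    using a10 x0 unfolding x_def
    by (intro eventually_conj order_tendstoD) auto
  hence "eventually (\<lambda>s. \<alpha> s < 1/10 \<and> x/2 < \<alpha> s \<and> \<alpha> s < 2*x) (nhds t)"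
    by (rule ev_nhds) (use a10 x0 in \<open>auto simp: x_def\<close>)
  moreover have "eventually (\<lambda>s. s \<in> {0<..<T}) (nhds t)"
    using tin by (intro eventually_nhds_in_open) auto
  ultimately have EV: "eventually (\<lambda>s. s \<in> {0<..<T} \<and> \<alpha> s < 1/10 \<and> x/2 < \<alpha> s \<and> \<alpha> s < 2*x) (nhds t)"
    by eventually_elim auto
  have EG: "eventually (\<lambda>s. 0 \<le> r1 s \<and> r1 s < (\<alpha> s)^2 \<and> \<alpha> s < r2 s \<and> r2 s < 3 * \<alpha> s \<and> 2 < r3 s \<and> r3 s < 5 \<and>
     (\<forall>\<mu>. P s \<mu> = (\<mu> - r1 s)*(\<mu> - r2 s)*(\<mu> - r3 s)) \<and> x/2 < \<alpha> s \<and> \<alpha> s < 2*x \<and> \<alpha> s < 1/10 \<and> 0 < \<alpha> s) (nhds t)"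
    using EV by eventually_elim (use good I in auto)
  have dP: "((\<lambda>s. P s z) has_real_derivative PD x (\<beta> t) (\<alpha>1 t) (\<beta>1 t) z) (at t)" for z
    unfolding P_def x_def by (rule CP_deriv) (use It in auto)
  have cP: "isCont (\<lambda>s. P s z) t" for z using dP by (rule DERIV_isCont)
  have sq: "y^2 \<le> y/10" if "0 < y" "y < 1/10" for y::real
    using that by (simp add: power2_eq_square)
  have x2: "x^2 \<le> x/10" using sq x0 x1 by simp
  have c1: "isCont r1 t"
  proof (rule root_cont[where u=r2 and v=r3 and c="(2/5*x)*1"])
    show "eventually (\<lambda>s. \<forall>\<mu>. P s \<mu> = (\<mu> - r1 s)*(\<mu> - r2 s)*(\<mu> - r3 s)) (nhds t)"
      using EG by eventually_elim auto
    show "eventually (\<lambda>s. (2/5*x)*1 \<le> \<bar>(r1 t - r2 s)*(r1 t - r3 s)\<bar>) (nhds t)"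
      using EG
    proof eventually_elim
      case (elim s)
      show ?case by (rule prod_lb) (use elim gt x2 x0 x1 in auto)
    qed
  qed (use cP x0 in auto)
  have c2: "isCont r2 t"
  proof (rule root_cont[where u=r1 and v=r3 and c="(4/5*x)*1"])
    show "eventually (\<lambda>s. \<forall>\<mu>. P s \<mu> = (\<mu> - r2 s)*(\<mu> - r1 s)*(\<mu> - r3 s)) (nhds t)"
      using EG by eventually_elim (auto simp: algebra_simps)
    show "eventually (\<lambda>s. (4/5*x)*1 \<le> \<bar>(r2 t - r1 s)*(r2 t - r3 s)\<bar>) (nhds t)"
      using EG
    proof eventually_elim
      case (elim s)
      have "(\<alpha> s)^2 \<le> \<alpha> s / 10" using sq elim by auto
      thus ?case by (intro prod_lb) (use elim gt x2 x0 x1 in auto)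
    qed
  qed (use cP x0 in auto)
  have c3: "isCont r3 t"
  proof (rule root_cont[where u=r1 and v=r2 and c="1*1"])
    show "eventually (\<lambda>s. \<forall>\<mu>. P s \<mu> = (\<mu> - r3 s)*(\<mu> - r1 s)*(\<mu> - r2 s)) (nhds t)"
      using EG by eventually_elim (auto simp: algebra_simps)
    show "eventually (\<lambda>s. 1*1 \<le> \<bar>(r3 t - r1 s)*(r3 t - r2 s)\<bar>) (nhds t)"
      using EG
    proof eventually_elim
      case (elim s)
      have "(\<alpha> s)^2 \<le> \<alpha> s / 10" using sq elim by auto
      thus ?case by (intro prod_lb) (use elim gt in auto)
    qed
  qed (use cP in auto)
  have Q1: "(9/10*x)*(19/10) \<le> \<bar>(r1 t - r2 t)*(r1 t - r3 t)\<bar>"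
    by (rule prod_lb) (use gt x2 x0 x1 in auto)
  have Q2: "(9/10*x)*(17/10) \<le> \<bar>(r2 t - r1 t)*(r2 t - r3 t)\<bar>"
    by (rule prod_lb) (use gt x2 x0 x1 in auto)
  have Q3: "1*1 \<le> \<bar>(r3 t - r1 t)*(r3 t - r2 t)\<bar>"
    by (rule prod_lb) (use gt x2 x0 x1 in auto)
  have d1: "(r1 has_real_derivative (- PD x (\<beta> t) (\<alpha>1 t) (\<beta>1 t) (r1 t) / ((r1 t - r2 t)*(r1 t - r3 t)))) (at t)"
  proof (rule root_deriv)
    show "eventually (\<lambda>s. \<forall>\<mu>. P s \<mu> = (\<mu> - r1 s)*(\<mu> - r2 s)*(\<mu> - r3 s)) (nhds t)"
      using EG by eventually_elim auto
    show "(r1 t - r2 t) * (r1 t - r3 t) \<noteq> 0" using Q1 x0 by auto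
  qed (use dP c2 c3 in auto)
  have d2: "(r2 has_real_derivative (- PD x (\<beta> t) (\<alpha>1 t) (\<beta>1 t) (r2 t) / ((r2 t - r1 t)*(r2 t - r3 t)))) (at t)"
  proof (rule root_deriv)
    show "eventually (\<lambda>s. \<forall>\<mu>. P s \<mu> = (\<mu> - r2 s)*(\<mu> - r1 s)*(\<mu> - r3 s)) (nhds t)"
      using EG by eventually_elim (auto simp: algebra_simps)
    show "(r2 t - r1 t) * (r2 t - r3 t) \<noteq> 0" using Q2 x0 by auto
  qed (use dP c1 c3 in auto)
  have d3: "(r3 has_real_derivative (- PD x (\<beta> t) (\<alpha>1 t) (\<beta>1 t) (r3 t) / ((r3 t - r1 t)*(r3 t - r2 t)))) (at t)"
  proof (rule root_deriv)
    show "eventually (\<lambda>s. \<forall>\<mu>. P s \<mu> = (\<mu> - r3 s)*(\<mu> - r1 s)*(\<mu> - r2 s)) (nhds t)"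
      using EG by eventually_elim (auto simp: algebra_simps)
    show "(r3 t - r1 t) * (r3 t - r2 t) \<noteq> 0" using Q3 by auto
  qed (use dP c1 c2 in auto)
  have a1: "\<bar>\<alpha>1 t\<bar> \<le> La" using It by simp
  note PB = PD_bounds[OF a1 bb x0 less_imp_le[OF x1]]
  have B1: "\<bar>- PD x (\<beta> t) (\<alpha>1 t) (\<beta>1 t) (r1 t) / ((r1 t - r2 t)*(r1 t - r3 t))\<bar> \<le> ((22*La+72*K)*x^2) / ((9/10*x)*(19/10))"
    by (rule div_bd[OF PB(1) Q1]) (use gt x0 in auto)
  have B2: "\<bar>- PD x (\<beta> t) (\<alpha>1 t) (\<beta>1 t) (r2 t) / ((r2 t - r1 t)*(r2 t - r3 t))\<bar> \<le> ((25*La+60*K)*x) / ((9/10*x)*(17/10))"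
    by (rule div_bd[OF PB(2) Q2]) (use gt x0 in auto)
  have B3: "\<bar>- PD x (\<beta> t) (\<alpha>1 t) (\<beta>1 t) (r3 t) / ((r3 t - r1 t)*(r3 t - r2 t))\<bar> \<le> (122*La+144*K) / (1*1)"
    by (rule div_bd[OF PB(3) Q3]) (use gt x0 in auto)
  have E1: "((22*La+72*K)*x^2) / ((9/10*x)*(19/10)) \<le> C * x"
  proof -
    have "((22*La+72*K)*x^2) / ((9/10*x)*(19/10)) = (22*La+72*K)*x * (100/171)"
      using x0 by (simp add: power2_eq_square field_simps)
    also have "\<dots> \<le> C * x"
    proof -
      have lx: "0 \<le> La*x" "0 \<le> K*x" using La0 K0 x0 by simp_all
      have "(22*La+72*K)*x * (100/171) = (2200/171)*(La*x) + (7200/171)*(K*x)" by (simp add: algebra_simps)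
      moreover have "C * x = 200*(La*x) + 200*(K*x) + x" unfolding C_def by (simp add: algebra_simps)
      ultimately show ?thesis using lx x0 by linarith
    qed
    finally show ?thesis .
  qed
  have E2: "((25*La+60*K)*x) / ((9/10*x)*(17/10)) \<le> C"
  proof -
    have "((25*La+60*K)*x) / ((9/10*x)*(17/10)) = (25*La+60*K) * (100/153)"
      using x0 by (simp add: field_simps)
    also have "\<dots> \<le> C" using La0 K0 unfolding C_def by (simp add: algebra_simps)
    finally show ?thesis .
  qed
  have E3: "(122*La+144*K) / (1*1) \<le> C" using La0 K0 unfolding C_def by simp
  show ?thesis
    unfolding C_def[unfolded K_def, symmetric] x_def[symmetric]
    using d1 d2 d3 B1 B2 B3 E1 E2 E3 unfolding r1_def r2_def r3_def
    by (intro exI conjI) (assumption | (erule order_trans)?, assumption)+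
qed

theorem lemma2p3:
  fixes a b :: "real \<Rightarrow> 'x::euclidean_space \<Rightarrow> real"
    and W :: "'x set" and Xbar :: 'x and c T :: real
  assumes "open W" and "Xbar \<in> W" and "c > 0" and "T > 0"
    and "smooth_bdd_on ({-c<..<T} \<times> W) (\<lambda>(t, X). a t X)"
    and "smooth_bdd_on ({-c<..<T} \<times> W) (\<lambda>(t, X). b t X)"
    and "\<forall>t\<in>{0..<T}. \<forall>X\<in>W. 4 * (a t X) ^ 3 - 27 * (b t X) ^ 2 \<ge> 0"
    and "a 0 Xbar = 0"
    and "\<forall>t\<in>{0<..<T}. \<forall>X\<in>W. a t X > 0"
  shows "\<exists>U C. open U \<and> (0, Xbar) \<in> U \<and> C > 0 \<and>
    (\<forall>(t, X)\<in>U. t > 0 \<longrightarrow>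
       (\<exists>D1 D2 D3.
          ((\<lambda>s. lam1 (Smat (a s X) (b s X))) has_real_derivative D1) (at t) \<and>
          ((\<lambda>s. lam2 (Smat (a s X) (b s X))) has_real_derivative D2) (at t) \<and>
          ((\<lambda>s. lam3 (Smat (a s X) (b s X))) has_real_derivative D3) (at t) \<and>
          \<bar>D1\<bar> \<le> C * a t X \<and> \<bar>D2\<bar> \<le> C \<and> \<bar>D3\<bar> \<le> C))"
proof -
  define \<Omega> :: "(real \<times> 'x) set" where "\<Omega> = {-c<..<T} \<times> W"
  define fa :: "real \<times> 'x \<Rightarrow> real" where "fa = (\<lambda>(t, X). a t X)"
  define fb :: "real \<times> 'x \<Rightarrow> real" where "fb = (\<lambda>(t, X). b t X)"
  have sa: "smooth_bdd_on \<Omega> fa" using assms(5) unfolding \<Omega>_def fa_def .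
  have sb: "smooth_bdd_on \<Omega> fb" using assms(6) unfolding \<Omega>_def fb_def .
  note ea = smooth_ext[OF sa] and eb = smooth_ext[OF sb]
  obtain La where La: "\<forall>p\<in>\<Omega>. \<bar>dderiv [(1,0)] fa p\<bar> \<le> La" using ea(3) by blast
  obtain Mb where Mb: "\<forall>p\<in>\<Omega>. \<bar>dderiv [(1,0),(1,0)] fb p\<bar> \<le> Mb" using eb(4) by blast
  define \<epsilon> where "\<epsilon> = min (1/10) (T/2)"
  define U where "U = (\<Omega> \<inter> fa -` {..<\<epsilon>}) \<inter> ({..<T/2} \<times> UNIV)"
  have o\<Omega>: "open \<Omega>" using assms(1) by (simp add: \<Omega>_def open_Times)
  have cfa: "continuous_on \<Omega> fa" using ea(1)
    by (meson continuous_at_imp_continuous_on differentiable_imp_continuous_within)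
  have oU: "open U" unfolding U_def
    by (intro open_Int continuous_open_preimage[OF cfa o\<Omega>] open_Times) auto
  have p0: "(0,Xbar) \<in> \<Omega>" using assms(2-4) by (simp add: \<Omega>_def)
  have inU: "(0,Xbar) \<in> U" using p0 assms(4,8) by (auto simp: U_def fa_def \<epsilon>_def)
  define C where "C = 200*La+200*((1+La)^2+1+Mb)+1"
  have La0: "0 \<le> La" using La p0 by (meson abs_ge_zero order_trans)
  have Mb0: "0 \<le> Mb" using Mb p0 by (meson abs_ge_zero order_trans)
  have C0: "C > 0" unfolding C_def using La0 Mb0 by (simp add: add_pos_nonneg)
  have main: "0 < t \<longrightarrow> (\<exists>D1 D2 D3.
          ((\<lambda>s. lam1 (Smat (a s X) (b s X))) has_real_derivative D1) (at t) \<and>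
          ((\<lambda>s. lam2 (Smat (a s X) (b s X))) has_real_derivative D2) (at t) \<and>
          ((\<lambda>s. lam3 (Smat (a s X) (b s X))) has_real_derivative D3) (at t) \<and>
          \<bar>D1\<bar> \<le> C * a t X \<and> \<bar>D2\<bar> \<le> C \<and> \<bar>D3\<bar> \<le> C)" if tX: "(t,X) \<in> U" for t X
  proof
    assume t0: "0 < t"
    have X: "X \<in> W" and tT2: "t < T/2" and ae: "a t X < \<epsilon>" using tX by (auto simp: U_def \<Omega>_def fa_def)
    have inO: "(s,X) \<in> \<Omega>" if "s \<in> {0<..<T}" for s using that X assms(3) by (auto simp: \<Omega>_def)
    show "\<exists>D1 D2 D3.
          ((\<lambda>s. lam1 (Smat (a s X) (b s X))) has_real_derivative D1) (at t) \<and>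
          ((\<lambda>s. lam2 (Smat (a s X) (b s X))) has_real_derivative D2) (at t) \<and>
          ((\<lambda>s. lam3 (Smat (a s X) (b s X))) has_real_derivative D3) (at t) \<and>
          \<bar>D1\<bar> \<le> C * a t X \<and> \<bar>D2\<bar> \<le> C \<and> \<bar>D3\<bar> \<le> C"
      unfolding C_def
    proof (rule pointwise[where T=T and ?\<alpha>1.0="\<lambda>s. dderiv [(1,0)] fa (s,X)"
          and ?\<beta>1.0="\<lambda>s. dderiv [(1,0)] fb (s,X)" and ?\<beta>2.0="\<lambda>s. dderiv [(1,0),(1,0)] fb (s,X)"])
      show "\<forall>s\<in>{0<..<T}. ((\<lambda>s. a s X) has_real_derivative dderiv [(1,0)] fa (s,X)) (at s) \<and>
          \<bar>dderiv [(1,0)] fa (s,X)\<bar> \<le> La \<and>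
          ((\<lambda>s. b s X) has_real_derivative dderiv [(1,0)] fb (s,X)) (at s) \<and>
          ((\<lambda>s. dderiv [(1,0)] fb (s,X)) has_real_derivative dderiv [(1,0),(1,0)] fb (s,X)) (at s) \<and>
          \<bar>dderiv [(1,0),(1,0)] fb (s,X)\<bar> \<le> Mb \<and> 0 < a s X \<and> 27*(b s X)^2 \<le> 4*(a s X)^3"
      proof
        fix s assume s: "s \<in> {0<..<T}"
        have sO: "(s,X) \<in> \<Omega>" using inO s .
        have d1: "((\<lambda>s. a s X) has_real_derivative dderiv [(1,0)] fa (s,X)) (at s)"
          using partial_t[of fa s X] ea(1) sO by (simp add: fa_def)
        have d2: "((\<lambda>s. b s X) has_real_derivative dderiv [(1,0)] fb (s,X)) (at s)"
          using partial_t[of fb s X] eb(1) sO by (simp add: fb_def)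
        have d3: "((\<lambda>s. dderiv [(1,0)] fb (s,X)) has_real_derivative dderiv [(1,0),(1,0)] fb (s,X)) (at s)"
          using partial_t[of "dderiv [(1,0)] fb" s X] eb(2) sO by (simp only: dderiv.simps(2))
        have pos: "0 < a s X" using assms(9) s X by blast
        have "4 * (a s X) ^ 3 - 27 * (b s X) ^ 2 \<ge> 0" using assms(7) s X by auto
        thus "((\<lambda>s. a s X) has_real_derivative dderiv [(1,0)] fa (s,X)) (at s) \<and>
          \<bar>dderiv [(1,0)] fa (s,X)\<bar> \<le> La \<and>
          ((\<lambda>s. b s X) has_real_derivative dderiv [(1,0)] fb (s,X)) (at s) \<and>
          ((\<lambda>s. dderiv [(1,0)] fb (s,X)) has_real_derivative dderiv [(1,0),(1,0)] fb (s,X)) (at s) \<and>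
          \<bar>dderiv [(1,0),(1,0)] fb (s,X)\<bar> \<le> Mb \<and> 0 < a s X \<and> 27*(b s X)^2 \<le> 4*(a s X)^3"
          using d1 d2 d3 pos La Mb sO by auto
      qed
    qed (use t0 tT2 ae in \<open>auto simp: \<epsilon>_def\<close>)
  qed
  show ?thesis
    by (rule exI[of _ U], rule exI[of _ C]) (use oU inU C0 main in auto)
qed

end
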